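(* Let $F$ be a 3SAT(3) formula satisfying the standing assumptions below, with variables $x_1,\dots,x_p$ and clauses $c_1,\dots,c_q$, and let $(G_s,L)$ be the temporal star constructed from $F$ as described below. For every nonnegative integer $\beta$: there exists a truth assignment $\tau$ of $F$ satisfying at least $\beta$ clauses of $F$ if and only if there exists a (partial) exploration $J$ of $(G_s,L)$ of size $|J|\ge 3p+\beta$.
   Context: A temporal star $(G_s,L)$ consists of a star $G_s$ with center $c$ and a map $L$ assigning to each edge a finite set of positive integer labels (times at which the edge is available). A journey is a sequence of time edges $(u,u_1,l_1),(u_1,u_2,l_2),\dots$ (each $l_t$ a label of the edge traversed) with strictly increasing labels $l_1<l_2<\cdots$. A (partial) exploration is a journey starting and ending at $c$; an edge $\{c,v\}$ is explored if the journey enters it from $c$ to $v$ at some label and later exits it from $v$ to $c$ at a strictly larger label; the size $|J|$ of an exploration $J$ is the number of edges (equivalently leaves) it explores. 3SAT(3): a CNF formula with variables $x_1,\dots,x_p$ and clauses $c_1,\dots,c_q$, each clause having at most $3$ literals and each variable appearing in at most $3$ clauses. Standing assumptions on $F$: every variable occurs at least once unnegated and at least once negated; if a variable occurs three times it occurs exactly once negated and twice unnegated, and if it occurs twice it occurs once negated and once unnegated. Construction of $(G_s,L)$ from $F$: the star has the following edges. For each $i=1,\dots,p$: an edge $e_i$ with labels $50i-10,\ 50i-7,\ 50i+10,\ 50i+13$; an edge $e_i'$ with labels $50i,\ 50i+1$; an edge $e_i''$ with labels $50i+15,\ 50i+16$. For each clause $c_j$, $j=1,\dots,q$, an edge $e_{p+j}$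 whose labels are: for every variable $x_i$ appearing unnegated in $c_j$ such that $c_j$ is the first clause (in the order $c_1,\dots,c_q$) containing $x_i$ unnegated, the labels $50i-12,\ 50i-9$; for every variable $x_i$ appearing unnegated in $c_j$ such that an earlier clause already contains $x_i$ unnegated, the labels $50i-8,\ 50i-5$; for every variable $x_i$ appearing negated in $c_j$, the labels $50i+8,\ 50i+11$. *)

theory Defs
  imports Main
begin

text \<open>Vertices of a star with leaf set of type 'e: the centre and one leaf per edge
  (edge {c,v} is identified with its leaf v).\<close>
datatype 'e vtx = Ctr | Lf 'e

type_synonym 'e time_edge = "'e vtx \<times> 'e vtx \<times> nat"

definition time_edge :: "'e set \<Rightarrow> ('e \<Rightarrow> nat set) \<Rightarrow> 'e time_edge \<Rightarrow> bool" where
  "time_edge Es L te \<longleftrightarrow> (case te of (u, w, l) \<Rightarrow>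
     \<exists>e \<in> Es. ((u = Ctr \<and> w = Lf e) \<or> (u = Lf e \<and> w = Ctr)) \<and> l \<in> L e)"

definition journey :: "'e set \<Rightarrow> ('e \<Rightarrow> nat set) \<Rightarrow> 'e time_edge list \<Rightarrow> bool" where
  "journey Es L J \<longleftrightarrow>
     (\<forall>k < length J. time_edge Es L (J ! k)) \<and>
     (\<forall>k. Suc k < length J \<longrightarrow> fst (snd (J ! k)) = fst (J ! Suc k)) \<and>
     (\<forall>k. Suc k < length J \<longrightarrow> snd (snd (J ! k)) < snd (snd (J ! Suc k)))"

definition exploration :: "'e set \<Rightarrow> ('e \<Rightarrow> nat set) \<Rightarrow> 'e time_edge list \<Rightarrow> bool" where
  "exploration Es L J \<longleftrightarrow> journey Es L J \<and>
     (J \<noteq> [] \<longrightarrow> fst (hd J) = Ctr \<and> fst (snd (last J)) = Ctr)"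

definition explored_edges :: "'e set \<Rightarrow> 'e time_edge list \<Rightarrow> 'e set" where
  "explored_edges Es J = {e \<in> Es. \<exists>k m l l'. k < m \<and> m < length J \<and>
       J ! k = (Ctr, Lf e, l) \<and> J ! m = (Lf e, Ctr, l') \<and> l < l'}"

definition expl_size :: "'e set \<Rightarrow> 'e time_edge list \<Rightarrow> nat" where
  "expl_size Es J = card (explored_edges Es J)"

text \<open>A literal is (i, b): variable x_i, unnegated iff b = True.
  A formula is given by p (variables x_1..x_p) and a list of clauses;
  clause c_j is cls ! (j - 1), j = 1..q with q = length cls.\<close>
type_synonym clause = "(nat \<times> bool) set"

definition pos_occ :: "clause list \<Rightarrow> nat \<Rightarrow> nat" where
  "pos_occ cls i = card {j. j < length cls \<and> (i, True) \<in> cls ! j}"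

definition neg_occ :: "clause list \<Rightarrow> nat \<Rightarrow> nat" where
  "neg_occ cls i = card {j. j < length cls \<and> (i, False) \<in> cls ! j}"

definition is_3sat3 :: "nat \<Rightarrow> clause list \<Rightarrow> bool" where
  "is_3sat3 p cls \<longleftrightarrow>
     (\<forall>c \<in> set cls. finite c \<and> card c \<le> 3 \<and> (\<forall>(i, b) \<in> c. 1 \<le> i \<and> i \<le> p)) \<and>
     (\<forall>i \<in> {1..p}. pos_occ cls i + neg_occ cls i \<le> 3)"

definition standing_assms :: "nat \<Rightarrow> clause list \<Rightarrow> bool" where
  "standing_assms p cls \<longleftrightarrow> (\<forall>i \<in> {1..p}.
     pos_occ cls i \<ge> 1 \<and> neg_occ cls i \<ge> 1 \<and>
     (pos_occ cls i + neg_occ cls i = 3 \<longrightarrow> neg_occ cls i = 1 \<and> pos_occ cls i = 2) \<and>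
     (pos_occ cls i + neg_occ cls i = 2 \<longrightarrow> neg_occ cls i = 1 \<and> pos_occ cls i = 1))"

definition sat_clause :: "(nat \<Rightarrow> bool) \<Rightarrow> clause \<Rightarrow> bool" where
  "sat_clause \<tau> c \<longleftrightarrow> (\<exists>(i, b) \<in> c. \<tau> i = b)"

definition num_sat :: "(nat \<Rightarrow> bool) \<Rightarrow> clause list \<Rightarrow> nat" where
  "num_sat \<tau> cls = card {j. j < length cls \<and> sat_clause \<tau> (cls ! j)}"

text \<open>Edge names: EE k is e_k (k = 1..p+q), EE' i is e_i', EE'' i is e_i''.\<close>
datatype sedge = EE nat | EE' nat | EE'' nat

definition star_edges :: "nat \<Rightarrow> clause list \<Rightarrow> sedge set" where
  "star_edges p cls = EE ` {1..p + length cls} \<union> EE' ` {1..p} \<union> EE'' ` {1..p}"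

definition clause_labels :: "nat \<Rightarrow> clause list \<Rightarrow> nat \<Rightarrow> nat \<Rightarrow> nat set" where
  "clause_labels p cls j i =
     (if (i, True) \<in> cls ! (j - 1) then
        (if (\<forall>j'. 1 \<le> j' \<and> j' < j \<longrightarrow> (i, True) \<notin> cls ! (j' - 1))
         then {50*i - 12, 50*i - 9} else {50*i - 8, 50*i - 5})
      else {}) \<union>
     (if (i, False) \<in> cls ! (j - 1) then {50*i + 8, 50*i + 11} else {})"

fun star_labels :: "nat \<Rightarrow> clause list \<Rightarrow> sedge \<Rightarrow> nat set" where
  "star_labels p cls (EE k) =
     (if 1 \<le> k \<and> k \<le> p then {50*k - 10, 50*k - 7, 50*k + 10, 50*k + 13}
      else if p < k \<and> k \<le> p + length cls then
        (\<Union>i \<in> {1..p}. clause_labels p cls (k - p) i)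
      else {})"
| "star_labels p cls (EE' i) = (if 1 \<le> i \<and> i \<le> p then {50*i, 50*i + 1} else {})"
| "star_labels p cls (EE'' i) = (if 1 \<le> i \<and> i \<le> p then {50*i + 15, 50*i + 16} else {})"

end

theory Submission
  imports Defs
begin

lemma journey_mono:
  assumes "journey Es L J" "i < j" "j < length J"
  shows "snd (snd (J ! i)) < snd (snd (J ! j))"
  using assms(2,3)
proof (induction j)
  case 0 then show ?case by simp
next
  case (Suc j)
  have s: "snd (snd (J ! j)) < snd (snd (J ! Suc j))"
    using assms(1) Suc.prems unfolding journey_def by blast
  show ?case
  proof (cases "i = j")
    case True then show ?thesis using s by simp
  next
    case False
    then have "i < j" using Suc.prems by simp
    then show ?thesis using Suc.IH Suc.prems s by simp
  qed
qed

lemma time_edge_in: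
  assumes "time_edge Es L (Ctr, Lf e, l)"
  shows "l \<in> L e \<and> e \<in> Es"
  using assms unfolding time_edge_def by auto

lemma time_edge_out:
  assumes "time_edge Es L (Lf e, w, l)"
  shows "w = Ctr \<and> l \<in> L e \<and> e \<in> Es"
  using assms unfolding time_edge_def by auto

definition good_sched :: "'e set \<Rightarrow> ('e \<Rightarrow> nat set) \<Rightarrow> 'e set \<Rightarrow> ('e \<Rightarrow> nat) \<Rightarrow> ('e \<Rightarrow> nat) \<Rightarrow> bool" where
  "good_sched Es L E A B \<longleftrightarrow> E \<subseteq> Es \<and>
     (\<forall>e\<in>E. A e < B e \<and> A e \<in> L e \<and> B e \<in> L e) \<and>
     (\<forall>e\<in>E. \<forall>e'\<in>E. e \<noteq> e' \<longrightarrow> B e < A e' \<or> B e' < A e)"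

lemma J_sched:
  assumes "exploration Es L J"
  shows "\<exists>A B. good_sched Es L (explored_edges Es J) A B"
proof -
  have jr: "journey Es L J" using assms unfolding exploration_def by simp
  let ?P = "\<lambda>e k. Suc k < length J \<and> fst (J!k) = Ctr \<and> fst (snd (J!k)) = Lf e \<and>
              fst (J ! Suc k) = Lf e \<and> fst (snd (J ! Suc k)) = Ctr"
  have "\<forall>e\<in>explored_edges Es J. \<exists>k. ?P e k"
  proof
    fix e assume "e \<in> explored_edges Es J"
    then obtain k m l l' where km: "k < m" "m < length J" "J ! k = (Ctr, Lf e, l)"
      unfolding explored_edges_def by blast
    have sk: "Suc k < length J" using km by simp
    have "fst (J ! Suc k) = Lf e" using jr sk km(3) unfolding journey_def by force
    moreover have "time_edge Es L (J ! Suc k)" using jr sk unfolding journey_def by blast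
    ultimately have "fst (snd (J ! Suc k)) = Ctr"
      using time_edge_out[of Es L e] by (metis prod.collapse)
    then show "\<exists>k. ?P e k" using sk km(3) \<open>fst (J ! Suc k) = Lf e\<close> by auto
  qed
  then obtain f where f: "\<forall>e\<in>explored_edges Es J. ?P e (f e)" by metis
  define A where "A e = snd (snd (J ! f e))" for e
  define B where "B e = snd (snd (J ! Suc (f e)))" for e
  have lab: "A e < B e \<and> A e \<in> L e \<and> B e \<in> L e" if "e \<in> explored_edges Es J" for e
  proof -
    have P: "?P e (f e)" using f that by blast
    have t1: "time_edge Es L (J ! f e)" and t2: "time_edge Es L (J ! Suc (f e))"
      using jr P unfolding journey_def by auto
    have "J ! f e = (Ctr, Lf e, A e)" using P A_def by (metis prod.collapse)
    then have "A e \<in> L e" using t1 time_edge_in by metis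
    moreover have "J ! Suc (f e) = (Lf e, Ctr, B e)" using P B_def by (metis prod.collapse)
    then have "B e \<in> L e" using t2 time_edge_out by metis
    moreover have "A e < B e" using journey_mono[OF jr, of "f e" "Suc (f e)"] P A_def B_def by simp
    ultimately show ?thesis by simp
  qed
  have disj: "B e < A e' \<or> B e' < A e" if "e \<in> explored_edges Es J" "e' \<in> explored_edges Es J" "e \<noteq> e'" for e e'
  proof -
    have P: "?P e (f e)" "?P e' (f e')" using f that by blast+
    have "f e \<noteq> f e'" using P that(3) by auto
    then consider "f e < f e'" | "f e' < f e" by linarith
    then show ?thesis
    proof cases
      case 1
      then have "Suc (f e) < f e'" using P by (metis Suc_lessI vtx.distinct(1))
      then show ?thesis using journey_mono[OF jr, of "Suc (f e)" "f e'"] P A_def B_def by simp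
    next
      case 2
      then have "Suc (f e') < f e" using P by (metis Suc_lessI vtx.distinct(1))
      then show ?thesis using journey_mono[OF jr, of "Suc (f e')" "f e"] P A_def B_def by simp
    qed
  qed
  have "explored_edges Es J \<subseteq> Es" unfolding explored_edges_def by auto
  then show ?thesis unfolding good_sched_def using lab disj by blast
qed

lemma journey_snoc:
  "journey Es L (xs @ [x]) \<longleftrightarrow> journey Es L xs \<and> time_edge Es L x \<and>
     (xs \<noteq> [] \<longrightarrow> fst (snd (last xs)) = fst x \<and> snd (snd (last xs)) < snd (snd x))"
  unfolding journey_def
  apply (cases xs rule: rev_cases)
   apply (auto simp: nth_append less_Suc_eq)
  done



lemma explored_append:
  "explored_edges Es J \<subseteq> explored_edges Es (J @ J')"
proof
  fix e assume "e \<in> explored_edges Es J"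
  then obtain k m l l' where "e \<in> Es" "k < m" "m < length J" "J ! k = (Ctr, Lf e, l)"
    "J ! m = (Lf e, Ctr, l')" "l < l'" unfolding explored_edges_def by blast
  moreover have "(J @ J') ! k = J ! k" "(J @ J') ! m = J ! m" using calculation by (simp_all add: nth_append)
  ultimately show "e \<in> explored_edges Es (J @ J')" unfolding explored_edges_def
    by (metis (mono_tags, lifting) length_append mem_Collect_eq trans_less_add1)
qed

lemma sched_J_aux:
  assumes "finite E"
  shows "good_sched Es L E A B \<longrightarrow> (\<exists>J. exploration Es L J \<and> E \<subseteq> explored_edges Es J \<and>
           (\<forall>t\<in>set J. \<exists>e\<in>E. snd (snd t) \<le> B e))"
  using assms
proof (induction E rule: finite_ranking_induct[where f = A])
  case empty
  then show ?case by (auto simp: exploration_def journey_def intro!: exI[of _ "[]"])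
next
  case (insert x S)
  show ?case
  proof
    assume g: "good_sched Es L (insert x S) A B"
    show "\<exists>J. exploration Es L J \<and> insert x S \<subseteq> explored_edges Es J \<and>
           (\<forall>t\<in>set J. \<exists>e\<in>insert x S. snd (snd t) \<le> B e)"
    proof (cases "x \<in> S")
      case True
      then have "insert x S = S" by blast
      then show ?thesis using insert g by simp
    next
      case False
      have gS: "good_sched Es L S A B" using g unfolding good_sched_def by blast
      then obtain J where J: "exploration Es L J" "S \<subseteq> explored_edges Es J"
        "\<forall>t\<in>set J. \<exists>e\<in>S. snd (snd t) \<le> B e" using insert by blast
      have xE: "x \<in> Es" "A x < B x" "A x \<in> L x" "B x \<in> L x" using g unfolding good_sched_def by auto
      have lt: "B y < A x" if "y \<in> S" for y
      proof -
        have "y \<noteq> x" using False that by blast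
        then have "B y < A x \<or> B x < A y" using g that unfolding good_sched_def by blast
        moreover have "A y \<le> A x" using insert that by blast
        ultimately show ?thesis using xE by linarith
      qed
      define J2 where "J2 = J @ [(Ctr, Lf x, A x), (Lf x, Ctr, B x)]"
      have te1: "time_edge Es L (Ctr, Lf x, A x)" and te2: "time_edge Es L (Lf x, Ctr, B x)"
        using xE unfolding time_edge_def by auto
      have jr: "journey Es L J" using J(1) unfolding exploration_def by simp
      have lastJ: "J \<noteq> [] \<Longrightarrow> fst (snd (last J)) = Ctr \<and> snd (snd (last J)) < A x"
      proof -
        assume "J \<noteq> []"
        then have "last J \<in> set J" by simp
        then obtain y where "y \<in> S" "snd (snd (last J)) \<le> B y" using J(3) by blast
        then show ?thesis using lt J(1) \<open>J \<noteq> []\<close> unfolding exploration_def by fastforce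
      qed
      have j1: "journey Es L (J @ [(Ctr, Lf x, A x)])"
        using journey_snoc[of Es L J] jr te1 lastJ by auto
      have "journey Es L ((J @ [(Ctr, Lf x, A x)]) @ [(Lf x, Ctr, B x)])"
        using journey_snoc[of Es L "J @ [(Ctr, Lf x, A x)]"] j1 te2 xE by simp
      then have jr2: "journey Es L J2" unfolding J2_def by simp
      have "fst (hd J2) = Ctr"
      proof (cases "J = []")
        case True then show ?thesis unfolding J2_def by simp
      next
        case False then show ?thesis using J(1) unfolding J2_def exploration_def by simp
      qed
      moreover have "fst (snd (last J2)) = Ctr" unfolding J2_def by simp
      ultimately have ex2: "exploration Es L J2" using jr2 unfolding exploration_def by blast
      have "S \<subseteq> explored_edges Es J2" using subset_trans[OF J(2) explored_append[of Es J "[(Ctr, Lf x, A x), (Lf x, Ctr, B x)]"]] unfolding J2_def .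
      moreover have "x \<in> explored_edges Es J2"
      proof -
        have "x \<in> Es \<and> length J < Suc (length J) \<and> Suc (length J) < length J2 \<and>
           J2 ! length J = (Ctr, Lf x, A x) \<and> J2 ! Suc (length J) = (Lf x, Ctr, B x) \<and> A x < B x"
          by (simp add: J2_def nth_append xE)
        then show ?thesis unfolding explored_edges_def by blast
      qed
      moreover have "\<forall>t\<in>set J2. \<exists>e\<in>insert x S. snd (snd t) \<le> B e"
        using J(3) xE unfolding J2_def by auto
      ultimately show ?thesis using ex2 by blast
    qed
  qed
qed

lemma sched_J:
  assumes "finite E" "good_sched Es L E A B"
  shows "\<exists>J. exploration Es L J \<and> E \<subseteq> explored_edges Es J"
  using sched_J_aux[OF assms(1)] assms(2) by blast



lemma cl_range:
  assumes "a \<in> clause_labels p cls j i" "1 \<le> i"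
  shows "50*i \<le> a + 12 \<and> a \<le> 50*i + 11"
  using assms unfolding clause_labels_def by (auto split: if_splits)

lemma cl_shape:
  assumes "a \<in> clause_labels p cls j i" "b \<in> clause_labels p cls j i" "a < b" "1 \<le> i"
  shows "(a = 50*i-12 \<and> b = 50*i-9 \<and> (i,True) \<in> cls!(j-1)) \<or>
         (a = 50*i-8 \<and> b = 50*i-5 \<and> (i,True) \<in> cls!(j-1)) \<or>
         (a = 50*i+8 \<and> b = 50*i+11 \<and> (i,False) \<in> cls!(j-1)) \<or>
         (a < 50*i \<and> 50*i+1 < b)"
proof -
  define P where "P = ((i,True) \<in> cls!(j-1))"
  define Q where "Q = (\<forall>j'. 1 \<le> j' \<and> j' < j \<longrightarrow> (i, True) \<notin> cls ! (j' - 1))"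
  define R where "R = ((i,False) \<in> cls!(j-1))"
  have cl: "clause_labels p cls j i = (if P then (if Q then {50*i - 12, 50*i - 9} else {50*i - 8, 50*i - 5}) else {})
     \<union> (if R then {50*i + 8, 50*i + 11} else {})"
    unfolding clause_labels_def P_def Q_def R_def by simp
  show ?thesis using assms(1,2,3,4) unfolding cl P_def[symmetric] R_def[symmetric]
    by (cases P; cases Q; cases R) auto
qed

lemma lab_cl:
  assumes "l \<in> star_labels p cls (EE k)" "p < k"
  shows "\<exists>i. 1 \<le> i \<and> i \<le> p \<and> l \<in> clause_labels p cls (k-p) i"
  using assms by (auto split: if_splits)

lemma ISL:
  assumes "p < k" "a < b" "a \<in> star_labels p cls (EE k)" "b \<in> star_labels p cls (EE k)"
  shows "\<exists>i. 1 \<le> i \<and> i \<le> p \<and> 50*i \<le> a+12 \<and> a \<le> 50*i+11 \<and>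
   ((a = 50*i-12 \<and> b = 50*i-9 \<and> (i,True) \<in> cls!(k-p-1)) \<or>
    (a = 50*i-8 \<and> b = 50*i-5 \<and> (i,True) \<in> cls!(k-p-1)) \<or>
    (a = 50*i+8 \<and> b = 50*i+11 \<and> (i,False) \<in> cls!(k-p-1)) \<or>
    (a < 50*i \<and> 50*i+1 < b) \<or> (a < 50*i+15 \<and> 50*i+16 < b))"
proof -
  obtain i where i: "1 \<le> i" "i \<le> p" "a \<in> clause_labels p cls (k-p) i"
    using lab_cl[OF assms(3,1)] by blast
  obtain i' where i': "1 \<le> i'" "i' \<le> p" "b \<in> clause_labels p cls (k-p) i'"
    using lab_cl[OF assms(4,1)] by blast
  have ra: "50*i \<le> a + 12 \<and> a \<le> 50*i + 11" using cl_range i by blast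
  have rb: "50*i' \<le> b + 12 \<and> b \<le> 50*i' + 11" using cl_range i' by blast
  show ?thesis
  proof (cases "i' = i")
    case True
    have "k - p - 1 = k - p - 1" ..
    then show ?thesis using cl_shape[OF i(3) i'(3)[unfolded True] assms(2) i(1)] i ra by auto
  next
    case False
    then have "i < i'" using ra rb assms(2) by linarith
    then have "a < 50*i+15 \<and> 50*i+16 < b" using ra rb by linarith
    then show ?thesis using i ra by blast
  qed
qed



lemma gs_lab:
  assumes "good_sched Es L E A B" "e \<in> E"
  shows "A e < B e \<and> A e \<in> L e \<and> B e \<in> L e \<and> e \<in> Es"
  using assms unfolding good_sched_def by blast

lemma gs_disj:
  assumes "good_sched Es L E A B" "e \<in> E" "e' \<in> E" "e \<noteq> e'"
  shows "B e < A e' \<or> B e' < A e"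
  using assms unfolding good_sched_def by blast

lemma div50: "50*i \<le> a + 12 \<Longrightarrow> a \<le> 50*i + 11 \<Longrightarrow> (a + 12) div 50 = (i::nat)"
  by linarith

lemma lab_var: "l \<in> star_labels p cls (EE i) \<Longrightarrow> 1 \<le> i \<Longrightarrow> i \<le> p \<Longrightarrow>
   l = 50*i-10 \<or> l = 50*i-7 \<or> l = 50*i+10 \<or> l = 50*i+13"
  by auto

lemma lab_var': "l \<in> star_labels p cls (EE' i) \<Longrightarrow> l = 50*i \<or> l = 50*i+1"
  by (auto split: if_splits)

lemma lab_var'': "l \<in> star_labels p cls (EE'' i) \<Longrightarrow> l = 50*i+15 \<or> l = 50*i+16"
  by (auto split: if_splits)

definition chg :: "nat \<Rightarrow> nat \<Rightarrow> sedge" where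
  "chg a b = (let i = (a+12) div 50 in
     if a < 50*i \<and> 50*i+1 < b then EE' i
     else if a < 50*i+15 \<and> 50*i+16 < b then EE'' i
     else if 50*i \<le> a then EE i else EE' i)"

lemma info:
  assumes g: "good_sched (star_edges p cls) (star_labels p cls) E A B"
    and k: "p < k" "EE k \<in> E" and uns: "\<not> sat_clause \<tau> (cls!(k-p-1))"
    and tau: "\<tau> = (\<lambda>i. EE i \<notin> E \<or> 50*i \<le> A (EE i))"
  shows "\<exists>i. 1 \<le> i \<and> i \<le> p \<and> chg (A (EE k)) (B (EE k)) \<notin> E \<and>
    ((chg (A (EE k)) (B (EE k)) = EE' i \<and> A (EE k) < 50*i \<and> 50*i+1 < B (EE k)) \<or>
     (chg (A (EE k)) (B (EE k)) = EE'' i \<and> A (EE k) < 50*i+15 \<and> 50*i+16 < B (EE k)) \<or>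
     (chg (A (EE k)) (B (EE k)) = EE i \<and> A (EE k) = 50*i+8 \<and> B (EE k) = 50*i+11) \<or>
     (chg (A (EE k)) (B (EE k)) = EE' i \<and> A (EE k) = 50*i-12 \<and> B (EE k) = 50*i-9 \<and>
        EE i \<in> E \<and> A (EE i) = 50*i-7 \<and> 50*i+10 \<le> B (EE i)))"
proof -
  define a where "a = A (EE k)"
  define b where "b = B (EE k)"
  have lk: "a < b" "a \<in> star_labels p cls (EE k)" "b \<in> star_labels p cls (EE k)"
    using gs_lab[OF g k(2)] a_def b_def by auto
  obtain i where i: "1 \<le> i" "i \<le> p" "50*i \<le> a+12" "a \<le> 50*i+11"
   "(a = 50*i-12 \<and> b = 50*i-9 \<and> (i,True) \<in> cls!(k-p-1)) \<or>
    (a = 50*i-8 \<and> b = 50*i-5 \<and> (i,True) \<in> cls!(k-p-1)) \<or>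
    (a = 50*i+8 \<and> b = 50*i+11 \<and> (i,False) \<in> cls!(k-p-1)) \<or>
    (a < 50*i \<and> 50*i+1 < b) \<or> (a < 50*i+15 \<and> 50*i+16 < b)"
    using ISL[OF k(1) lk] by blast
  have dv: "(a + 12) div 50 = i" using div50 i(3,4) .
  have chd: "chg a b = (if a < 50*i \<and> 50*i+1 < b then EE' i
     else if a < 50*i+15 \<and> 50*i+16 < b then EE'' i
     else if 50*i \<le> a then EE i else EE' i)" unfolding chg_def Let_def dv ..
  have nE': "EE' i \<notin> E" if "a < 50*i" "50*i+1 < b"
  proof
    assume "EE' i \<in> E"
    then have "A (EE' i) < B (EE' i)" "A (EE' i) \<in> star_labels p cls (EE' i)" "B (EE' i) \<in> star_labels p cls (EE' i)"
      using gs_lab[OF g \<open>EE' i \<in> E\<close>] by blast+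
    then have "A (EE' i) = 50*i \<and> B (EE' i) = 50*i+1" using lab_var'[of "A (EE' i)" p cls i] lab_var'[of "B (EE' i)" p cls i] by linarith
    moreover have "B (EE k) < A (EE' i) \<or> B (EE' i) < A (EE k)" using gs_disj[OF g k(2) \<open>EE' i \<in> E\<close>] by simp
    ultimately show False using that a_def b_def by linarith
  qed
  have nE'': "EE'' i \<notin> E" if "a < 50*i+15" "50*i+16 < b"
  proof
    assume "EE'' i \<in> E"
    then have "A (EE'' i) < B (EE'' i)" "A (EE'' i) \<in> star_labels p cls (EE'' i)" "B (EE'' i) \<in> star_labels p cls (EE'' i)"
      using gs_lab[OF g \<open>EE'' i \<in> E\<close>] by blast+
    then have "A (EE'' i) = 50*i+15 \<and> B (EE'' i) = 50*i+16" using lab_var''[of "A (EE'' i)" p cls i] lab_var''[of "B (EE'' i)" p cls i] by linarith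
    moreover have "B (EE k) < A (EE'' i) \<or> B (EE'' i) < A (EE k)" using gs_disj[OF g k(2) \<open>EE'' i \<in> E\<close>] by simp
    ultimately show False using that a_def b_def by linarith
  qed
  have varI: "A (EE i) < B (EE i) \<and> (A (EE i) = 50*i-10 \<or> A (EE i) = 50*i-7 \<or> A (EE i) = 50*i+10 \<or> A (EE i) = 50*i+13)
     \<and> (B (EE i) = 50*i-10 \<or> B (EE i) = 50*i-7 \<or> B (EE i) = 50*i+10 \<or> B (EE i) = 50*i+13)
     \<and> (B (EE k) < A (EE i) \<or> B (EE i) < A (EE k))" if "EE i \<in> E"
  proof -
    have "A (EE i) < B (EE i)" "A (EE i) \<in> star_labels p cls (EE i)" "B (EE i) \<in> star_labels p cls (EE i)"
      using gs_lab[OF g that] by auto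
    moreover have "EE k \<noteq> EE i" using k(1) i(2) by simp
    ultimately show ?thesis using lab_var[of _ p cls i] i(1,2) gs_disj[OF g k(2) that] by blast
  qed
  have satc: "\<tau> j \<noteq> bb" if "(j, bb) \<in> cls!(k-p-1)" for j bb
    using uns that unfolding sat_clause_def by blast
  consider (c4) "a < 50*i \<and> 50*i+1 < b"
    | (c5) "\<not> (a < 50*i \<and> 50*i+1 < b)" "a < 50*i+15 \<and> 50*i+16 < b"
    | (c3) "a = 50*i+8 \<and> b = 50*i+11 \<and> (i,False) \<in> cls!(k-p-1)"
    | (c12) "(a = 50*i-12 \<and> b = 50*i-9 \<or> a = 50*i-8 \<and> b = 50*i-5) \<and> (i,True) \<in> cls!(k-p-1)"
    using i(5) by blast
  then show ?thesis
  proof cases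
    case c4
    then have "chg a b = EE' i" using chd by simp
    then show ?thesis using i(1,2) nE' c4 a_def b_def by (intro exI[of _ i]) auto
  next
    case c5
    then have "chg a b = EE'' i" using chd by simp
    then show ?thesis using i(1,2) nE'' c5 a_def b_def by (intro exI[of _ i]) auto
  next
    case c3
    then have ch: "chg a b = EE i" using chd i(1) by auto
    have "\<tau> i" using satc c3 by blast
    have "EE i \<notin> E"
    proof
      assume "EE i \<in> E"
      then have "50*i \<le> A (EE i)" using \<open>\<tau> i\<close> tau by simp
      then show False using varI[OF \<open>EE i \<in> E\<close>] c3 a_def b_def i(1) by linarith
    qed
    then show ?thesis using i(1,2) ch c3 a_def b_def by (intro exI[of _ i]) auto
  next
    case c12
    then have ch: "chg a b = EE' i" using chd i(1) by auto
    have "\<not> \<tau> i" using satc c12 by blast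
    then have ei: "EE i \<in> E" "A (EE i) < 50*i" using tau by auto
    have ab: "A (EE i) = 50*i-7 \<and> 50*i+10 \<le> B (EE i) \<and> a = 50*i-12 \<and> b = 50*i-9"
      using varI[OF ei(1)] ei(2) c12 a_def[symmetric] b_def[symmetric] i(1) by (elim conjE disjE; simp; linarith)
    moreover have "EE' i \<notin> E"
    proof
      assume "EE' i \<in> E"
      then have "A (EE' i) < B (EE' i)" "A (EE' i) \<in> star_labels p cls (EE' i)" "B (EE' i) \<in> star_labels p cls (EE' i)"
        using gs_lab[OF g \<open>EE' i \<in> E\<close>] by blast+
      then have "A (EE' i) = 50*i \<and> B (EE' i) = 50*i+1" using lab_var'[of "A (EE' i)" p cls i] lab_var'[of "B (EE' i)" p cls i] by linarith
      moreover have "B (EE i) < A (EE' i) \<or> B (EE' i) < A (EE i)" using gs_disj[OF g ei(1) \<open>EE' i \<in> E\<close>] by simp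
      ultimately show False using ab i(1) by linarith
    qed
    ultimately show ?thesis using i(1,2) ch ei a_def b_def by (intro exI[of _ i]) auto
  qed
qed



definition VV :: "nat \<Rightarrow> sedge set" where
  "VV p = EE ` {1..p} \<union> EE' ` {1..p} \<union> EE'' ` {1..p}"

lemma card_VV: "card (VV p) = 3 * p"
proof -
  have "card (EE ` {1..p}) = p" "card (EE' ` {1..p}) = p" "card (EE'' ` {1..p}) = p"
    by (simp_all add: card_image inj_on_def)
  moreover have "EE ` {1..p} \<inter> EE' ` {1..p} = {}" "(EE ` {1..p} \<union> EE' ` {1..p}) \<inter> EE'' ` {1..p} = {}"
    by auto
  ultimately show ?thesis unfolding VV_def
    by (simp add: card_Un_disjoint)
qed

lemma edges_eq: "star_edges p cls = VV p \<union> EE ` {p+1..p + length cls}"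
proof -
  have "{1..p+length cls} = {1..p} \<union> {p+1..p+length cls}" by auto
  then show ?thesis unfolding star_edges_def VV_def by (simp add: image_Un Un_ac)
qed

lemma finite_edges: "finite (star_edges p cls)"
  unfolding star_edges_def by simp

lemma inj_chg:
  assumes g: "good_sched (star_edges p cls) (star_labels p cls) E A B"
    and tau: "\<tau> = (\<lambda>i. EE i \<notin> E \<or> 50*i \<le> A (EE i))"
    and k1: "p < k1" "EE k1 \<in> E" "\<not> sat_clause \<tau> (cls!(k1-p-1))"
    and k2: "p < k2" "EE k2 \<in> E" "\<not> sat_clause \<tau> (cls!(k2-p-1))"
    and eq: "chg (A (EE k1)) (B (EE k1)) = chg (A (EE k2)) (B (EE k2))"
  shows "k1 = k2"
proof (rule ccontr)
  assume ne: "k1 \<noteq> k2"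
  obtain i1 where I1: "1 \<le> i1" "i1 \<le> p" "chg (A (EE k1)) (B (EE k1)) \<notin> E"
    "(chg (A (EE k1)) (B (EE k1)) = EE' i1 \<and> A (EE k1) < 50*i1 \<and> 50*i1+1 < B (EE k1)) \<or>
     (chg (A (EE k1)) (B (EE k1)) = EE'' i1 \<and> A (EE k1) < 50*i1+15 \<and> 50*i1+16 < B (EE k1)) \<or>
     (chg (A (EE k1)) (B (EE k1)) = EE i1 \<and> A (EE k1) = 50*i1+8 \<and> B (EE k1) = 50*i1+11) \<or>
     (chg (A (EE k1)) (B (EE k1)) = EE' i1 \<and> A (EE k1) = 50*i1-12 \<and> B (EE k1) = 50*i1-9 \<and>
        EE i1 \<in> E \<and> A (EE i1) = 50*i1-7 \<and> 50*i1+10 \<le> B (EE i1))"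
    using info[OF g k1 tau] by blast
  obtain i2 where I2: "1 \<le> i2" "i2 \<le> p" "chg (A (EE k2)) (B (EE k2)) \<notin> E"
    "(chg (A (EE k2)) (B (EE k2)) = EE' i2 \<and> A (EE k2) < 50*i2 \<and> 50*i2+1 < B (EE k2)) \<or>
     (chg (A (EE k2)) (B (EE k2)) = EE'' i2 \<and> A (EE k2) < 50*i2+15 \<and> 50*i2+16 < B (EE k2)) \<or>
     (chg (A (EE k2)) (B (EE k2)) = EE i2 \<and> A (EE k2) = 50*i2+8 \<and> B (EE k2) = 50*i2+11) \<or>
     (chg (A (EE k2)) (B (EE k2)) = EE' i2 \<and> A (EE k2) = 50*i2-12 \<and> B (EE k2) = 50*i2-9 \<and>
        EE i2 \<in> E \<and> A (EE i2) = 50*i2-7 \<and> 50*i2+10 \<le> B (EE i2))"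
    using info[OF g k2 tau] by blast
  have D: "B (EE k1) < A (EE k2) \<or> B (EE k2) < A (EE k1)" using gs_disj[OF g k1(2) k2(2)] ne by simp
  have D1: "EE i2 \<in> E \<Longrightarrow> B (EE k1) < A (EE i2) \<or> B (EE i2) < A (EE k1)"
    using gs_disj[OF g k1(2)] k1(1) I2(2) by simp
  have D2: "EE i1 \<in> E \<Longrightarrow> B (EE k2) < A (EE i1) \<or> B (EE i1) < A (EE k2)"
    using gs_disj[OF g k2(2)] k2(1) I1(2) by simp
  define c where "c = chg (A (EE k1)) (B (EE k1))"
  have c2: "c = chg (A (EE k2)) (B (EE k2))" using eq c_def by simp
  show False
    using I1(1,4) I2(1,4) D D1 D2 unfolding c_def[symmetric] c2[symmetric]
    by (elim disjE conjE; simp; linarith?)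
qed

lemma comb:
  assumes g: "good_sched (star_edges p cls) (star_labels p cls) E A B"
    and c: "3 * p + \<beta> \<le> card E"
  shows "\<exists>\<tau>. \<beta> \<le> num_sat \<tau> cls"
proof -
  define \<tau> where "\<tau> = (\<lambda>i. EE i \<notin> E \<or> 50*i \<le> A (EE i))"
  define q where "q = length cls"
  define U where "U = {k. p < k \<and> k \<le> p + q \<and> EE k \<in> E \<and> \<not> sat_clause \<tau> (cls!(k-p-1))}"
  define S where "S = {k. p < k \<and> k \<le> p + q \<and> EE k \<in> E \<and> sat_clause \<tau> (cls!(k-p-1))}"
  define ch where "ch k = chg (A (EE k)) (B (EE k))" for k
  have Esub: "E \<subseteq> star_edges p cls" using g unfolding good_sched_def by blast
  have finE: "finite E" using Esub finite_edges finite_subset by blast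
  have finU: "finite U" "finite S" unfolding U_def S_def by auto
  have inj: "inj_on ch U"
    unfolding inj_on_def U_def ch_def using inj_chg[OF g \<tau>_def] by blast
  have img: "ch ` U \<subseteq> VV p - E"
  proof
    fix x assume "x \<in> ch ` U"
    then obtain k where k: "k \<in> U" "x = ch k" by blast
    then have "p < k" "EE k \<in> E" "\<not> sat_clause \<tau> (cls!(k-p-1))" unfolding U_def by auto
    from info[OF g this \<tau>_def] obtain i where "1 \<le> i" "i \<le> p" "ch k \<notin> E"
      "ch k = EE' i \<or> ch k = EE'' i \<or> ch k = EE i" unfolding ch_def by blast
    then show "x \<in> VV p - E" unfolding VV_def k(2) by auto
  qed
  have cU: "card U \<le> card (VV p - E)"
    using card_inj_on_le[OF inj img] by (simp add: VV_def)
  have cVE: "card (VV p - E) = 3 * p - card (VV p \<inter> E)"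
    using card_Diff_subset_Int[of "VV p" E] card_VV by (simp add: VV_def)
  have Edec: "E = (VV p \<inter> E) \<union> (EE ` U \<union> EE ` S)"
  proof
    show "E \<subseteq> (VV p \<inter> E) \<union> (EE ` U \<union> EE ` S)"
    proof
      fix e assume e: "e \<in> E"
      then have "e \<in> VV p \<union> EE ` {p+1..p+q}" using Esub edges_eq q_def by blast
      then show "e \<in> (VV p \<inter> E) \<union> (EE ` U \<union> EE ` S)"
        using e unfolding U_def S_def by auto
    qed
  next
    show "(VV p \<inter> E) \<union> (EE ` U \<union> EE ` S) \<subseteq> E" unfolding U_def S_def by auto
  qed
  have d1: "(VV p \<inter> E) \<inter> (EE ` U \<union> EE ` S) = {}" unfolding VV_def U_def S_def by auto
  have d2: "EE ` U \<inter> EE ` S = {}" unfolding U_def S_def by auto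
  have "card E = card (VV p \<inter> E) + card (EE ` U) + card (EE ` S)"
    apply (subst Edec)
    using d1 d2 finU finE by (simp add: card_Un_disjoint)
  also have "\<dots> = card (VV p \<inter> E) + card U + card S"
    by (simp add: card_image inj_on_def)
  finally have cE: "card E = card (VV p \<inter> E) + card U + card S" .
  have "card (VV p \<inter> E) \<le> 3 * p" using card_VV card_mono[of "VV p" "VV p \<inter> E"]
    by (simp add: VV_def)
  then have cS: "\<beta> \<le> card S" using c cE cU cVE by linarith
  have "card S \<le> card {j. j < length cls \<and> sat_clause \<tau> (cls ! j)}"
  proof (rule card_inj_on_le)
    show "inj_on (\<lambda>k. k - p - 1) S" unfolding S_def inj_on_def by auto
    show "(\<lambda>k. k - p - 1) ` S \<subseteq> {j. j < length cls \<and> sat_clause \<tau> (cls ! j)}"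
      unfolding S_def q_def by auto
    show "finite {j. j < length cls \<and> sat_clause \<tau> (cls ! j)}" by simp
  qed
  then show ?thesis using cS unfolding num_sat_def by (intro exI[of _ \<tau>]) linarith
qed



lemma occ_bounds:
  assumes "is_3sat3 p cls" "standing_assms p cls" "1 \<le> i" "i \<le> p"
  shows "pos_occ cls i \<le> 2 \<and> neg_occ cls i \<le> 1"
proof -
  have "pos_occ cls i + neg_occ cls i \<le> 3" using assms unfolding is_3sat3_def by auto
  moreover have "pos_occ cls i \<ge> 1 \<and> neg_occ cls i \<ge> 1 \<and>
     (pos_occ cls i + neg_occ cls i = 3 \<longrightarrow> neg_occ cls i = 1 \<and> pos_occ cls i = 2) \<and>
     (pos_occ cls i + neg_occ cls i = 2 \<longrightarrow> neg_occ cls i = 1 \<and> pos_occ cls i = 1)"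
    using assms unfolding standing_assms_def by auto
  ultimately show ?thesis by linarith
qed

lemma neg_unique:
  assumes "neg_occ cls i \<le> 1" "j1 < length cls" "j2 < length cls"
    "(i, False) \<in> cls ! j1" "(i, False) \<in> cls ! j2"
  shows "j1 = j2"
proof (rule ccontr)
  assume "j1 \<noteq> j2"
  then have "card {j1, j2} = 2" by simp
  moreover have "card {j1, j2} \<le> neg_occ cls i" unfolding neg_occ_def
    by (rule card_mono) (use assms in auto)
  ultimately show False using assms(1) by simp
qed

lemma pos_three:
  assumes "pos_occ cls i \<le> 2" "j1 < j2" "j2 < j3" "j3 < length cls"
    "(i, True) \<in> cls ! j1" "(i, True) \<in> cls ! j2" "(i, True) \<in> cls ! j3"
  shows False
proof -
  have "card {j1, j2, j3} = 3" using assms(2,3) by simp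
  moreover have "card {j1, j2, j3} \<le> pos_occ cls i" unfolding pos_occ_def
    by (rule card_mono) (use assms in auto)
  ultimately show False using assms(1) by simp
qed

definition firstp :: "clause list \<Rightarrow> nat \<Rightarrow> nat \<Rightarrow> bool" where
  "firstp cls i j = (\<forall>j'. 1 \<le> j' \<and> j' < j \<longrightarrow> (i, True) \<notin> cls ! (j' - 1))"

definition litk :: "nat \<Rightarrow> clause list \<Rightarrow> (nat \<Rightarrow> bool) \<Rightarrow> nat \<Rightarrow> nat \<times> bool" where
  "litk p cls \<tau> k = (SOME x. x \<in> cls ! (k - p - 1) \<and> \<tau> (fst x) = snd x)"

definition Wt :: "nat \<Rightarrow> clause list \<Rightarrow> (nat \<Rightarrow> bool) \<Rightarrow> sedge \<Rightarrow> nat" where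
  "Wt p cls \<tau> e = (case e of EE k \<Rightarrow> if k \<le> p then k else fst (litk p cls \<tau> k) | EE' i \<Rightarrow> i | EE'' i \<Rightarrow> i)"

definition Ot :: "nat \<Rightarrow> clause list \<Rightarrow> (nat \<Rightarrow> bool) \<Rightarrow> sedge \<Rightarrow> nat" where
  "Ot p cls \<tau> e = (case e of EE k \<Rightarrow> if k \<le> p then (if \<tau> k then 22 else 2)
      else (if snd (litk p cls \<tau> k) then (if firstp cls (fst (litk p cls \<tau> k)) (k - p) then 0 else 4) else 20)
    | EE' i \<Rightarrow> 12 | EE'' i \<Rightarrow> 27)"

definition Sat :: "nat \<Rightarrow> clause list \<Rightarrow> (nat \<Rightarrow> bool) \<Rightarrow> nat set" where
  "Sat p cls \<tau> = {k. p < k \<and> k \<le> p + length cls \<and> sat_clause \<tau> (cls ! (k - p - 1))}"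

lemma litk_prop:
  assumes "k \<in> Sat p cls \<tau>"
  shows "litk p cls \<tau> k \<in> cls ! (k - p - 1) \<and> \<tau> (fst (litk p cls \<tau> k)) = snd (litk p cls \<tau> k)"
proof -
  have "\<exists>x. x \<in> cls ! (k - p - 1) \<and> \<tau> (fst x) = snd x"
    using assms unfolding Sat_def sat_clause_def by auto
  then show ?thesis unfolding litk_def by (rule someI_ex)
qed

lemma litk_range:
  assumes "is_3sat3 p cls" "k \<in> Sat p cls \<tau>"
  shows "1 \<le> fst (litk p cls \<tau> k) \<and> fst (litk p cls \<tau> k) \<le> p"
proof -
  have "k - p - 1 < length cls" using assms(2) unfolding Sat_def by auto
  then have "cls ! (k - p - 1) \<in> set cls" by simp
  then show ?thesis using assms(1) litk_prop[OF assms(2)] unfolding is_3sat3_def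
    by (cases "litk p cls \<tau> k") fastforce
qed

definition Ac where "Ac p cls \<tau> e = 50 * Wt p cls \<tau> e + Ot p cls \<tau> e - 12"
definition Bc where "Bc p cls \<tau> e = Ac p cls \<tau> e + (if Ot p cls \<tau> e = 12 \<or> Ot p cls \<tau> e = 27 then 1 else 3)"
definition Ec where "Ec p cls \<tau> = VV p \<union> EE ` Sat p cls \<tau>"

lemma tag:
  assumes "is_3sat3 p cls" "e \<in> Ec p cls \<tau>"
  defines "Ww \<equiv> Wt p cls \<tau> e" and "Oo \<equiv> Ot p cls \<tau> e"
  shows "1 \<le> Ww \<and> Ww \<le> p \<and> (Oo = 0 \<or> Oo = 4 \<or> Oo = 20 \<or> Oo = 2 \<or> Oo = 22 \<or> Oo = 12 \<or> Oo = 27) \<and>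
    (Oo = 2 \<longrightarrow> \<not> \<tau> Ww) \<and> (Oo = 22 \<longrightarrow> \<tau> Ww) \<and> (Oo = 0 \<or> Oo = 4 \<longrightarrow> \<tau> Ww) \<and> (Oo = 20 \<longrightarrow> \<not> \<tau> Ww)"
proof (cases "e \<in> VV p")
  case True
  then show ?thesis unfolding VV_def Ww_def Oo_def Wt_def Ot_def by (auto split: if_splits)
next
  case False
  then obtain k where k: "k \<in> Sat p cls \<tau>" "e = EE k" using assms(2) unfolding Ec_def by blast
  have "p < k" using k(1) unfolding Sat_def by simp
  moreover note litk_prop[OF k(1)] litk_range[OF assms(1) k(1)]
  ultimately show ?thesis unfolding Ww_def Oo_def Wt_def Ot_def k(2) by auto
qed

lemma labels:
  assumes "is_3sat3 p cls" "e \<in> Ec p cls \<tau>"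
  shows "Ac p cls \<tau> e < Bc p cls \<tau> e \<and> Ac p cls \<tau> e \<in> star_labels p cls e \<and>
         Bc p cls \<tau> e \<in> star_labels p cls e \<and> e \<in> star_edges p cls"
proof (cases "e \<in> VV p")
  case True
  then show ?thesis unfolding VV_def Ac_def Bc_def Wt_def Ot_def star_edges_def by (auto split: if_splits)
next
  case False
  then obtain k where k: "k \<in> Sat p cls \<tau>" "e = EE k" using assms(2) unfolding Ec_def by blast
  have kp: "p < k" "k \<le> p + length cls" using k(1) unfolding Sat_def by auto
  obtain i bb where ib: "litk p cls \<tau> k = (i, bb)" by fastforce
  have L: "(i, bb) \<in> cls ! (k - p - 1)" "\<tau> i = bb" "1 \<le> i" "i \<le> p"
    using litk_prop[OF k(1)] litk_range[OF assms(1) k(1)] ib by auto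
  have W: "Wt p cls \<tau> e = i" using kp ib unfolding Wt_def k(2) by simp
  have O: "Ot p cls \<tau> e = (if bb then (if firstp cls i (k - p) then 0 else 4) else 20)"
    using kp ib unfolding Ot_def k(2) by simp
  have inc: "{Ac p cls \<tau> e, Bc p cls \<tau> e} \<subseteq> clause_labels p cls (k - p) i"
    using L unfolding Ac_def Bc_def W O clause_labels_def firstp_def
    by (cases bb) auto
  have "clause_labels p cls (k - p) i \<subseteq> star_labels p cls e" using kp L(3,4) k(2) by auto
  moreover have "Ac p cls \<tau> e < Bc p cls \<tau> e" unfolding Bc_def by simp
  moreover have "e \<in> star_edges p cls" using kp unfolding k(2) star_edges_def by auto
  ultimately show ?thesis using inc by blast
qed

lemma cl_inj_ord:
  assumes A3: "is_3sat3 p cls" and SA: "standing_assms p cls"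
    and k: "k \<in> Sat p cls \<tau>" and k': "k' \<in> Sat p cls \<tau>" and lt: "k < k'"
    and W: "fst (litk p cls \<tau> k) = fst (litk p cls \<tau> k')"
    and O: "Ot p cls \<tau> (EE k) = Ot p cls \<tau> (EE k')"
  shows False
proof -
  have kp: "p < k" "k \<le> p + length cls" "p < k'" "k' \<le> p + length cls"
    using k k' unfolding Sat_def by auto
  obtain i bb where ib: "litk p cls \<tau> k = (i, bb)" by fastforce
  obtain i' bb' where ib': "litk p cls \<tau> k' = (i', bb')" by fastforce
  have ii: "i' = i" using W ib ib' by simp
  have L: "(i, bb) \<in> cls ! (k - p - 1)" "1 \<le> i" "i \<le> p"
    using litk_prop[OF k] litk_range[OF A3 k] ib by auto
  have L': "(i, bb') \<in> cls ! (k' - p - 1)"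
    using litk_prop[OF k'] ib' ii by auto
  have ob: "pos_occ cls i \<le> 2 \<and> neg_occ cls i \<le> 1" using occ_bounds[OF A3 SA L(2,3)] .
  have O': "(if bb then (if firstp cls i (k - p) then 0 else 4) else 20) =
            (if bb' then (if firstp cls i (k' - p) then 0 else 4) else (20::nat))"
  proof -
    have "Ot p cls \<tau> (EE k) = (if bb then (if firstp cls i (k - p) then 0 else 4) else 20)"
      using kp ib unfolding Ot_def by simp
    moreover have "Ot p cls \<tau> (EE k') = (if bb' then (if firstp cls i (k' - p) then 0 else 4) else 20)"
      using kp ib' ii unfolding Ot_def by simp
    ultimately show ?thesis using O by simp
  qed
  show False
  proof (cases bb)
    case False
    then have "\<not> bb'" using O' by (auto split: if_splits)
    then have "k - p - 1 = k' - p - 1"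
      using neg_unique[of cls i "k - p - 1" "k' - p - 1"] ob L L' False kp by auto
    then show False using kp lt by linarith
  next
    case True
    then have bb': "bb'" using O' by (auto split: if_splits)
    show False
    proof (cases "firstp cls i (k' - p)")
      case True
      then have "(i, True) \<notin> cls ! ((k - p) - 1)" unfolding firstp_def using kp lt
        by (metis diff_less_mono le_add_diff_inverse less_imp_le_nat less_one not_le zero_less_diff)
      then show False using L \<open>bb\<close> by simp
    next
      case False
      then have nf: "\<not> firstp cls i (k - p)" using O' True bb' by (auto split: if_splits)
      then obtain j' where j': "1 \<le> j'" "j' < k - p" "(i, True) \<in> cls ! (j' - 1)"
        unfolding firstp_def by blast
      have ar: "j' - 1 < k - p - 1" "k - p - 1 < k' - p - 1" "k' - p - 1 < length cls"
        using j'(1,2) kp lt by linarith+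
      show False
        using pos_three[OF ob[THEN conjunct1] ar] j'(3) L(1) L' True bb' by simp
    qed
  qed
qed

lemma tag_inj:
  assumes A3: "is_3sat3 p cls" and SA: "standing_assms p cls"
    and e: "e \<in> Ec p cls \<tau>" "e' \<in> Ec p cls \<tau>" "e \<noteq> e'"
    and W: "Wt p cls \<tau> e = Wt p cls \<tau> e'" and O: "Ot p cls \<tau> e = Ot p cls \<tau> e'"
  shows False
proof -
  have vv: "Ot p cls \<tau> x \<in> {2, 22, 12, 27}" if "x \<in> VV p" for x
    using that unfolding VV_def Ot_def by (auto split: if_splits)
  have cc: "Ot p cls \<tau> (EE k) \<in> {0, 4, 20} \<and> Wt p cls \<tau> (EE k) = fst (litk p cls \<tau> k)"
    if "k \<in> Sat p cls \<tau>" for k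
    using that unfolding Sat_def Ot_def Wt_def by auto
  consider (a) "e \<in> VV p" "e' \<in> VV p" | (b) k where "k \<in> Sat p cls \<tau>" "e = EE k" "e' \<in> VV p"
    | (c) k where "k \<in> Sat p cls \<tau>" "e' = EE k" "e \<in> VV p"
    | (d) k k' where "k \<in> Sat p cls \<tau>" "e = EE k" "k' \<in> Sat p cls \<tau>" "e' = EE k'"
    using e unfolding Ec_def by blast
  then show False
  proof cases
    case a
    then show False using W O e(3) unfolding VV_def Wt_def Ot_def by (auto split: if_splits)
  next
    case (b k)
    then show False using vv[OF b(3)] cc[OF b(1)] O by auto
  next
    case (c k)
    then show False using vv[OF c(3)] cc[OF c(1)] O by auto
  next
    case (d k k')
    then have "k \<noteq> k'" using e(3) by auto
    then consider "k < k'" | "k' < k" by linarith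
    then show False
    proof cases
      case 1
      then show False using cl_inj_ord[OF A3 SA d(1) d(3) 1] W O cc[OF d(1)] cc[OF d(3)] d by simp
    next
      case 2
      then show False using cl_inj_ord[OF A3 SA d(3) d(1) 2] W O cc[OF d(1)] cc[OF d(3)] d by simp
    qed
  qed
qed

lemma arith_disj:
  fixes w w' oo oo' :: nat and \<tau> :: "nat \<Rightarrow> bool"
  assumes "1 \<le> w" "1 \<le> w'"
    "oo = 0 \<or> oo = 4 \<or> oo = 20 \<or> oo = 2 \<or> oo = 22 \<or> oo = 12 \<or> oo = 27"
    "oo' = 0 \<or> oo' = 4 \<or> oo' = 20 \<or> oo' = 2 \<or> oo' = 22 \<or> oo' = 12 \<or> oo' = 27"
    "(oo = 2 \<longrightarrow> \<not> \<tau> w) \<and> (oo = 22 \<longrightarrow> \<tau> w) \<and> (oo = 0 \<or> oo = 4 \<longrightarrow> \<tau> w) \<and> (oo = 20 \<longrightarrow> \<not> \<tau> w)"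
    "(oo' = 2 \<longrightarrow> \<not> \<tau> w') \<and> (oo' = 22 \<longrightarrow> \<tau> w') \<and> (oo' = 0 \<or> oo' = 4 \<longrightarrow> \<tau> w') \<and> (oo' = 20 \<longrightarrow> \<not> \<tau> w')"
    "\<not> (w = w' \<and> oo = oo')"
  shows "50 * w + oo - 12 + (if oo = 12 \<or> oo = 27 then 1 else 3) < 50 * w' + oo' - 12 \<or>
         50 * w' + oo' - 12 + (if oo' = 12 \<or> oo' = 27 then 1 else 3) < 50 * w + oo - 12"
proof -
  have b1: "oo + (if oo = 12 \<or> oo = 27 then 1 else 3) \<le> 28" using assms(3) by auto
  have b2: "oo' + (if oo' = 12 \<or> oo' = 27 then 1 else 3) \<le> 28" using assms(4) by auto
  consider "w < w'" | "w' < w" | "w = w'" by linarith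
  then show ?thesis
  proof cases
    case 1
    then show ?thesis using assms(1,2) b1 by linarith
  next
    case 2
    then show ?thesis using assms(1,2) b2 by linarith
  next
    case 3
    have o: "oo + (if oo = 12 \<or> oo = 27 then 1 else 3) < oo' \<or> oo' + (if oo' = 12 \<or> oo' = 27 then 1 else 3) < oo"
      using assms(3,4,5,6,7) 3 by (elim disjE; simp only: if_True if_False; simp)
    have e1: "50 * w + oo - 12 = (50 * w - 12) + oo" "50 * w' + oo' - 12 = (50 * w - 12) + oo'"
      using assms(1) 3 by simp_all
    show ?thesis unfolding e1 using o by linarith
  qed
qed

lemma constr_good:
  assumes A3: "is_3sat3 p cls" and SA: "standing_assms p cls"
  shows "good_sched (star_edges p cls) (star_labels p cls) (Ec p cls \<tau>) (Ac p cls \<tau>) (Bc p cls \<tau>)"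
proof -
  have "Bc p cls \<tau> e < Ac p cls \<tau> e' \<or> Bc p cls \<tau> e' < Ac p cls \<tau> e"
    if e: "e \<in> Ec p cls \<tau>" "e' \<in> Ec p cls \<tau>" "e \<noteq> e'" for e e'
  proof -
    have "\<not> (Wt p cls \<tau> e = Wt p cls \<tau> e' \<and> Ot p cls \<tau> e = Ot p cls \<tau> e')"
      using tag_inj[OF A3 SA e] by blast
    then show ?thesis unfolding Bc_def Ac_def
      using arith_disj[of "Wt p cls \<tau> e" "Wt p cls \<tau> e'" "Ot p cls \<tau> e" "Ot p cls \<tau> e'" \<tau>]
        tag[OF A3 e(1)] tag[OF A3 e(2)] by blast
  qed
  then show ?thesis unfolding good_sched_def using labels[OF A3] by blast
qed

lemma card_Ec:
  "card (Ec p cls \<tau>) = 3 * p + num_sat \<tau> cls"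
proof -
  have d: "VV p \<inter> EE ` Sat p cls \<tau> = {}" unfolding VV_def Sat_def by auto
  have f: "finite (Sat p cls \<tau>)" unfolding Sat_def by auto
  have "card (EE ` Sat p cls \<tau>) = card (Sat p cls \<tau>)" by (simp add: card_image inj_on_def)
  also have "\<dots> = num_sat \<tau> cls" unfolding num_sat_def
  proof -
    have inj: "inj_on (\<lambda>k. k - p - 1) (Sat p cls \<tau>)" unfolding inj_on_def Sat_def by auto
    have img: "(\<lambda>k. k - p - 1) ` (Sat p cls \<tau>) = {j. j < length cls \<and> sat_clause \<tau> (cls ! j)}"
    proof (rule subset_antisym)
      show "(\<lambda>k. k - p - 1) ` (Sat p cls \<tau>) \<subseteq> {j. j < length cls \<and> sat_clause \<tau> (cls ! j)}"
        unfolding Sat_def by auto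
      show "{j. j < length cls \<and> sat_clause \<tau> (cls ! j)} \<subseteq> (\<lambda>k. k - p - 1) ` (Sat p cls \<tau>)"
      proof
        fix j assume "j \<in> {j. j < length cls \<and> sat_clause \<tau> (cls ! j)}"
        then show "j \<in> (\<lambda>k. k - p - 1) ` (Sat p cls \<tau>)"
          unfolding Sat_def by (intro image_eqI[of _ _ "j + p + 1"]) auto
      qed
    qed
    show "card (Sat p cls \<tau>) = card {j. j < length cls \<and> sat_clause \<tau> (cls ! j)}"
      using card_image[OF inj] img by simp
  qed
  finally have "card (EE ` Sat p cls \<tau>) = num_sat \<tau> cls" .
  moreover have "finite (VV p)" unfolding VV_def by simp
  ultimately show ?thesis unfolding Ec_def using card_Un_disjoint[OF _ _ d] f card_VV by simp
qed

theorem lemma2: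
  fixes p :: nat and cls :: "clause list" and \<beta> :: nat
  assumes "is_3sat3 p cls"
    and "standing_assms p cls"
  shows "(\<exists>\<tau>. num_sat \<tau> cls \<ge> \<beta>) \<longleftrightarrow>
         (\<exists>J. exploration (star_edges p cls) (star_labels p cls) J \<and>
              expl_size (star_edges p cls) J \<ge> 3 * p + \<beta>)"
proof
  assume "\<exists>\<tau>. num_sat \<tau> cls \<ge> \<beta>"
  then obtain \<tau> where t: "num_sat \<tau> cls \<ge> \<beta>" by blast
  have g: "good_sched (star_edges p cls) (star_labels p cls) (Ec p cls \<tau>) (Ac p cls \<tau>) (Bc p cls \<tau>)"
    using constr_good[OF assms] .
  have fin: "finite (Ec p cls \<tau>)" using g finite_edges finite_subset unfolding good_sched_def by blast
  obtain J where J: "exploration (star_edges p cls) (star_labels p cls) J"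
    "Ec p cls \<tau> \<subseteq> explored_edges (star_edges p cls) J"
    using sched_J[OF fin g] by blast
  have "explored_edges (star_edges p cls) J \<subseteq> star_edges p cls" unfolding explored_edges_def by auto
  then have "finite (explored_edges (star_edges p cls) J)" using finite_edges finite_subset by blast
  then have "card (Ec p cls \<tau>) \<le> expl_size (star_edges p cls) J"
    unfolding expl_size_def using J(2) card_mono by blast
  then show "\<exists>J. exploration (star_edges p cls) (star_labels p cls) J \<and>
              expl_size (star_edges p cls) J \<ge> 3 * p + \<beta>"
    using J(1) card_Ec[of p cls \<tau>] t by (intro exI[of _ J]) simp
next
  assume "\<exists>J. exploration (star_edges p cls) (star_labels p cls) J \<and>
              expl_size (star_edges p cls) J \<ge> 3 * p + \<beta>"
  then obtain J where J: "exploration (star_edges p cls) (star_labels p cls) J"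
    "expl_size (star_edges p cls) J \<ge> 3 * p + \<beta>" by blast
  obtain A B where "good_sched (star_edges p cls) (star_labels p cls) (explored_edges (star_edges p cls) J) A B"
    using J_sched[OF J(1)] by blast
  from comb[OF this] J(2) show "\<exists>\<tau>. num_sat \<tau> cls \<ge> \<beta>" unfolding expl_size_def by blast
qed


end
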